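(* Let $\mathbb{Q}[y,z]$ be the polynomial ring and let $D$ be the unique derivation of $\mathbb{Q}[y,z]$ with $D(y)=z^2$ and $D(z)=yz$ (so that, with $y=\tan x$, $z=\sec x$, $D$ corresponds to $d/dx$). Define integers $R_{n,k}$, $W_{n,k}$, $W^{l}_{n,k}$ by $$D^n(y+z)=\sum_{k=0}^{n}R_{n,k}\,y^{n-k}z^{k+1}\ (n\ge 1),\qquad D^n(y)=\sum_{k=0}^{\lfloor (n-1)/2\rfloor}W_{n,k}\,y^{n-2k-1}z^{2k+2}\ (n\ge 1),\qquad D^n(z)=\sum_{k=0}^{\lfloor n/2\rfloor}W^{l}_{n,k}\,y^{n-2k}z^{2k+1}\ (n\ge 0),$$ with the convention that any of these numbers whose index $k$ lies outside the stated summation range is $0$. Then for $0\le k\le n$: (i) $R_{n+1,k}=(k+1)R_{n,k}+(n-k+2)R_{n,k-2}$ for all $n\ge 1$; (ii) $W_{n,k}=(2k+2)W_{n-1,k}+(n-2k)W_{n-1,k-1}$ for all $n\ge 2$; (iii) $W^{l}_{n,k}=(2k+1)W^{l}_{n-1,k}+(n-2k+1)W^{l}_{n-1,k-1}$ for all $n\ge 1$.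
   Context: The expansions are in the polynomial ring $\mathbb{Q}[y,z]$ (i.e. formally, without using $z^2=1+y^2$). *)

theory Defs imports "HOL-Computational_Algebra.Polynomial" begin

text \<open>Q[y,z] is represented as rat poly poly: outer variable z, inner variable y.\<close>
type_synonym qyz = "rat poly poly"

definition Y :: qyz where "Y = [:[:0, 1:]:]"
definition Z :: qyz where "Z = [:0, 1:]"

definition coeffYZ :: "qyz \<Rightarrow> nat \<Rightarrow> nat \<Rightarrow> rat" where
  "coeffYZ f a b = coeff (coeff f b) a"

definition dY :: "qyz \<Rightarrow> qyz" where "dY f = map_poly pderiv f"
definition dZ :: "qyz \<Rightarrow> qyz" where "dZ f = pderiv f"

definition D :: "qyz \<Rightarrow> qyz" where "D f = Z^2 * dY f + Y * Z * dZ f"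

definition R :: "nat \<Rightarrow> int \<Rightarrow> rat" where
  "R n k = (if 0 \<le> k \<and> k \<le> int n
            then coeffYZ ((D ^^ n) (Y + Z)) (nat (int n - k)) (nat (k + 1)) else 0)"

definition W :: "nat \<Rightarrow> int \<Rightarrow> rat" where
  "W n k = (if 0 \<le> k \<and> 2 * k \<le> int n - 1
            then coeffYZ ((D ^^ n) Y) (nat (int n - 2 * k - 1)) (nat (2 * k + 2)) else 0)"

definition Wl :: "nat \<Rightarrow> int \<Rightarrow> rat" where
  "Wl n k = (if 0 \<le> k \<and> 2 * k \<le> int n
            then coeffYZ ((D ^^ n) Z) (nat (int n - 2 * k)) (nat (2 * k + 1)) else 0)"

end

theory Submission imports Defs begin


lemma Z2: "(Z::qyz)^2 = monom 1 2" by (simp add: Z_def monom_altdef)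
lemma YZ: "Y * Z = monom [:0,1:] 1" by (simp add: Y_def Z_def monom_altdef)
lemma x_monom: "[:0,1::rat:] = monom 1 1" by (simp add: monom_altdef)

lemma coeff_ofnat_mult: "coeff (of_nat b * p) a = of_nat b * coeff (p::rat poly) a"
  by (simp add: of_nat_poly)

lemma coeffD: "coeffYZ (D f) a b =
   (if b \<ge> 2 then of_nat (a+1) * coeffYZ f (a+1) (b-2) else 0) +
   (if a \<ge> 1 then of_nat b * coeffYZ f (a-1) b else 0)"
proof -
  have 1: "coeff (coeff (Z^2 * dY f) b) a = (if b \<ge> 2 then of_nat (a+1) * coeffYZ f (a+1) (b-2) else 0)"
    by (simp add: Z2 coeff_monom_mult dY_def coeff_map_poly coeff_pderiv coeffYZ_def)
  have 2: "coeff (coeff (Y * Z * dZ f) b) a = (if a \<ge> 1 then of_nat b * coeffYZ f (a-1) b else 0)"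
  proof (cases b)
    case 0 then show ?thesis by (simp add: YZ coeff_monom_mult)
  next
    case (Suc c)
    then show ?thesis
    proof -
      have "coeff (Y * Z * dZ f) b = [:0,1:] * (of_nat b * coeff f b)"
        using Suc by (simp add: YZ coeff_monom_mult dZ_def coeff_pderiv)
      then show ?thesis
        by (simp only: x_monom coeff_monom_mult coeff_ofnat_mult coeffYZ_def) simp
    qed
  qed
  show ?thesis unfolding D_def using 1 2 by (simp add: coeffYZ_def)
qed

lemma coeffD2: "coeffYZ (D f) (a+1) (b+2) = of_nat (a+2) * coeffYZ f (a+2) b + of_nat (b+2) * coeffYZ f a (b+2)"
  by (simp add: coeffD)
lemma coeffD0: "coeffYZ (D f) 0 (b+2) = of_nat 1 * coeffYZ f 1 b"
  by (simp add: coeffD)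

lemma z0: "coeffYZ (D f) a 0 = 0" by (simp add: coeffD)

lemma Rn: "R n (int k) = (if k \<le> n then coeffYZ ((D^^n)(Y+Z)) (n-k) (k+1) else 0)"
proof -
  have a: "nat (int n - int k) = n - k" "nat (int k + 1) = k + 1" by auto
  show ?thesis unfolding R_def a by simp
qed
lemma Wn: "W n (int k) = (if 2*k+1 \<le> n then coeffYZ ((D^^n) Y) (n-2*k-1) (2*k+2) else 0)"
proof -
  have a: "nat (int n - 2 * int k - 1) = n - 2*k - 1" "nat (2 * int k + 2) = 2*k + 2" by auto
  have b: "(0 \<le> int k \<and> 2 * int k \<le> int n - 1) = (2*k+1 \<le> n)" by auto
  show ?thesis unfolding W_def a b by simp
qed
lemma Wln: "Wl n (int k) = (if 2*k \<le> n then coeffYZ ((D^^n) Z) (n-2*k) (2*k+1) else 0)"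
proof -
  have a: "nat (int n - 2 * int k) = n - 2*k" "nat (2 * int k + 1) = 2*k + 1" by auto
  have b: "(0 \<le> int k \<and> 2 * int k \<le> int n) = (2*k \<le> n)" by auto
  show ?thesis unfolding Wl_def a b by simp
qed
lemma neg: "k < 0 \<Longrightarrow> R n k = 0 \<and> W n k = 0 \<and> Wl n k = 0"
  by (simp add: R_def W_def Wl_def)

lemma partI:
  assumes "n \<ge> 1" "k \<le> n"
  shows "R (n + 1) (int k) = of_int (int k + 1) * R n (int k)
                               + of_int (int n - int k + 2) * R n (int k - 2)"
proof -
  obtain m where m: "n = Suc m" using assms by (cases n) auto
  have e: "(D^^(n+1)) (Y+Z) = D ((D^^n) (Y+Z))" by simp
  consider "k = 0" | "k = 1" | "k \<ge> 2" by linarith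
  then show ?thesis
  proof cases
    case 1
    have r2: "R n (int k - 2) = 0" using 1 neg by simp
    have "R (n+1) (int k) = coeffYZ ((D^^n) (Y+Z)) n 1"
      using Rn[of "n+1" k] 1 assms by (simp add: e coeffD)
    moreover have "R n (int k) = coeffYZ ((D^^n) (Y+Z)) n 1" using Rn[of n k] 1 by simp
    ultimately show ?thesis using 1 r2 by simp
  next
    case 2 
    have "(D^^n) (Y+Z) = D ((D^^m) (Y+Z))" by (simp add: m)
    then have zz: "coeffYZ ((D^^n) (Y+Z)) (n+1) 0 = 0" by (simp add: z0)
    have r2: "R n (int k - 2) = 0" using 2 neg by simp
    have "R (n+1) (int k) = 2 * coeffYZ ((D^^n) (Y+Z)) (n-1) 2"
      using Rn[of "n+1" k] 2 assms zz by (simp add: e coeffD numeral_2_eq_2)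
    moreover have "R n (int k) = coeffYZ ((D^^n) (Y+Z)) (n-1) 2" using Rn[of n k] 2 assms by (simp add: numeral_2_eq_2)
    ultimately show ?thesis using 2 r2 by simp
  next
    case 3
    then obtain j where 3: "k = j + 2" by (metis add.commute le_Suc_ex)
    have "int k - 2 = int j" using 3 by simp
    then have r2: "R n (int k - 2) = coeffYZ ((D^^n) (Y+Z)) (n-j) (j+1)" using 3 assms by (simp add: Rn)
    have r1: "R n (int k) = (if k \<le> n then coeffYZ ((D^^n) (Y+Z)) (n-k) (k+1) else 0)" by (simp add: Rn)
    have l: "R (n+1) (int k) = of_nat (n-k+2) * coeffYZ ((D^^n) (Y+Z)) (n-k+2) (j+1)
       + of_nat (k+1) * coeffYZ ((D^^n) (Y+Z)) (n-k) (k+1)"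
    proof -
      have "R (n+1) (int k) = coeffYZ (D ((D^^n) (Y+Z))) (n-k+1) (j+1+2)"
      proof -
        have x: "n + 1 - k = n-k+1" "k+1 = j+1+2" using assms 3 by auto
        show ?thesis using Rn[of "n+1" k] assms unfolding x e by simp
      qed
      also have "... = of_nat (n-k+2) * coeffYZ ((D^^n) (Y+Z)) (n-k+2) (j+1)
       + of_nat (j+1+2) * coeffYZ ((D^^n) (Y+Z)) (n-k) (j+1+2)" by (rule coeffD2)
      finally show ?thesis using 3 by simp
    qed
    have r2': "R n (int k - 2) = coeffYZ ((D^^n) (Y+Z)) (n-k+2) (j+1)" proof -
      have "n-k+2 = n-j" using 3 assms by simp
      then show ?thesis using r2 by simp
    qed
    have c: "(of_int (int n - int k + 2) :: rat) = of_nat (n-k+2)" using assms by (simp add: of_nat_diff)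
    show ?thesis unfolding l r2' c using assms Rn[of n k] by simp
  qed
qed


lemma partII:
  assumes "n \<ge> 2" "k \<le> n"
  shows "W n (int k) = of_int (2 * int k + 2) * W (n - 1) (int k)
                          + of_int (int n - 2 * int k) * W (n - 1) (int k - 1)"
proof -
  obtain p where p: "n = Suc (Suc p)" using assms by (metis add_2_eq_Suc le_Suc_ex)
  have e: "(D^^n) Y = D ((D^^(n-1)) Y)" using p by simp
  have zz: "coeffYZ ((D^^(n-1)) Y) x 0 = 0" for x
  proof -
    have "(D^^(n-1)) Y = D ((D^^p) Y)" using p by simp
    then show ?thesis by (simp add: z0)
  qed
  show ?thesis
  proof (cases "2*k+1 \<le> n")
    case False
    then have l: "W n (int k) = 0" using Wn[of n k] by simp
    have r1: "W (n-1) (int k) = 0" using Wn[of "n-1" k] False by simp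
    show ?thesis
    proof (cases k)
      case 0 then show ?thesis using l r1 neg by simp
    next
      case (Suc i)
      have "int k - 1 = int i" using Suc by simp
      then have r2: "W (n-1) (int k - 1) = (if 2*i+1 \<le> n-1 then coeffYZ ((D^^(n-1)) Y) (n-1-2*i-1) (2*i+2) else 0)"
        using Wn[of "n-1" i] by simp
      show ?thesis
      proof (cases "2*i+1 \<le> n-1")
        case True
        then have "int n - 2 * int k = 0" using False Suc assms by presburger
        then show ?thesis using l r1 by simp
      next
        case False
        then show ?thesis using l r1 r2 by simp
      qed
    qed
  next
    case True
    then obtain a where a: "n = 2*k+1+a" using le_Suc_ex by blast
    let ?G = "(D^^(n-1)) Y"
    have l: "W n (int k) = coeffYZ (D ?G) a (2*k+2)" using Wn[of n k] a e by simp
    have r1: "W (n-1) (int k) = (if a \<ge> 1 then coeffYZ ?G (a-1) (2*k+2) else 0)"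
      using Wn[of "n-1" k] a by auto
    have c: "(of_int (int n - 2 * int k) :: rat) = of_nat (a+1)" using a by simp
    show ?thesis
    proof (cases k)
      case 0
      have "coeffYZ (D ?G) a 2 = (if a \<ge> 1 then of_nat 2 * coeffYZ ?G (a-1) 2 else 0)"
        using zz by (simp add: coeffD)
      moreover have k2: "2*k+2 = (2::nat)" using 0 by simp
      ultimately show ?thesis using l[unfolded k2] r1[unfolded k2] neg 0 by simp
    next
      case (Suc i)
      have "int k - 1 = int i" using Suc by simp
      then have r2: "W (n-1) (int k - 1) = coeffYZ ?G (a+1) (2*i+2)"
        using Wn[of "n-1" i] a Suc by simp
      have "coeffYZ (D ?G) a (2*k+2) = of_nat (a+1) * coeffYZ ?G (a+1) (2*i+2) +
         (if a \<ge> 1 then of_nat (2*k+2) * coeffYZ ?G (a-1) (2*k+2) else 0)"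
        using Suc by (simp add: coeffD)
      then show ?thesis unfolding l r1 r2 c by (simp add: algebra_simps)
    qed
  qed
qed

lemma partIII:
  assumes "n \<ge> 1" "k \<le> n"
  shows "Wl n (int k) = of_int (2 * int k + 1) * Wl (n - 1) (int k)
                           + of_int (int n - 2 * int k + 1) * Wl (n - 1) (int k - 1)"
proof -
  have e: "(D^^n) Z = D ((D^^(n-1)) Z)" using assms by (cases n) auto
  show ?thesis
  proof (cases "2*k \<le> n")
    case False
    then have l: "Wl n (int k) = 0" using Wln[of n k] by simp
    have r1: "Wl (n-1) (int k) = 0" using Wln[of "n-1" k] False by simp
    show ?thesis
    proof (cases k)
      case 0 then show ?thesis using l r1 neg by simp
    next
      case (Suc i)
      have "int k - 1 = int i" using Suc by simp
      then have r2: "Wl (n-1) (int k - 1) = (if 2*i \<le> n-1 then coeffYZ ((D^^(n-1)) Z) (n-1-2*i) (2*i+1) else 0)"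
        using Wln[of "n-1" i] by simp
      show ?thesis
      proof (cases "2*i \<le> n-1")
        case True
        then have "int n - 2 * int k + 1 = 0" using False Suc assms by presburger
        then show ?thesis using l r1 by simp
      next
        case False
        then show ?thesis using l r1 r2 by simp
      qed
    qed
  next
    case True
    then obtain a where a: "n = 2*k+a" using le_Suc_ex by blast
    let ?G = "(D^^(n-1)) Z"
    have l: "Wl n (int k) = coeffYZ (D ?G) a (2*k+1)" using Wln[of n k] a e by simp
    have r1: "Wl (n-1) (int k) = (if a \<ge> 1 then coeffYZ ?G (a-1) (2*k+1) else 0)"
      using Wln[of "n-1" k] a assms by auto
    have c: "(of_int (int n - 2 * int k + 1) :: rat) = of_nat (a+1)" using a by simp
    show ?thesis
    proof (cases k)
      case 0
      have "coeffYZ (D ?G) a (2*k+1) = (if a \<ge> 1 then of_nat 1 * coeffYZ ?G (a-1) 1 else 0)"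
        using 0 by (simp add: coeffD)
      then show ?thesis using l r1 neg 0 assms a by simp
    next
      case (Suc i)
      have "int k - 1 = int i" using Suc by simp
      then have r2: "Wl (n-1) (int k - 1) = coeffYZ ?G (a+1) (2*i+1)"
        using Wln[of "n-1" i] a Suc by simp
      have "coeffYZ (D ?G) a (2*k+1) = of_nat (a+1) * coeffYZ ?G (a+1) (2*i+1) +
         (if a \<ge> 1 then of_nat (2*k+1) * coeffYZ ?G (a-1) (2*k+1) else 0)"
        using Suc by (simp add: coeffD)
      then show ?thesis unfolding l r1 r2 c by (simp add: algebra_simps)
    qed
  qed
qed


theorem mainTheorem1:
  shows "(\<forall>n::nat. n \<ge> 1 \<longrightarrow> (\<forall>k::nat. k \<le> n \<longrightarrow>
            R (n + 1) (int k) = of_int (int k + 1) * R n (int k)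
                               + of_int (int n - int k + 2) * R n (int k - 2)))
       \<and> (\<forall>n::nat. n \<ge> 2 \<longrightarrow> (\<forall>k::nat. k \<le> n \<longrightarrow>
            W n (int k) = of_int (2 * int k + 2) * W (n - 1) (int k)
                          + of_int (int n - 2 * int k) * W (n - 1) (int k - 1)))
       \<and> (\<forall>n::nat. n \<ge> 1 \<longrightarrow> (\<forall>k::nat. k \<le> n \<longrightarrow>
            Wl n (int k) = of_int (2 * int k + 1) * Wl (n - 1) (int k)
                           + of_int (int n - 2 * int k + 1) * Wl (n - 1) (int k - 1)))"
    using partI partII partIII by blast

end
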